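(* Let $P(z)=z^2-bz+c$ with $(b,c)\in\mathbb{C}^2$. Then $P$ has one root of modulus $1$ and the other root of modulus at most $1$ if and only if $|c|^2-\frac12|b|^2-\frac12|b^2-4c|+1=0$ and $|c|\leq1$. *)

theory Defs
  imports "HOL-Analysis.Analysis"
begin

end

theory Submission
  imports Defs
begin

lemma para: "(cmod (u+v))^2 + (cmod (u-v))^2 = 2*((cmod u)^2 + (cmod v)^2)"
  unfolding cmod_power2 by (simp add: power2_eq_square algebra_simps)

lemma key:
  fixes u v :: complex
  shows "(cmod (u * v))^2 - (1/2) * (cmod (u+v))^2 - (1/2) * cmod ((u+v)^2 - 4*(u * v)) + 1
         = ((cmod u)^2 - 1) * ((cmod v)^2 - 1)"
proof -
  have "(u+v)^2 - 4*(u * v) = (u-v)^2" by (simp add: power2_eq_square algebra_simps)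
  hence e: "cmod ((u+v)^2 - 4*(u * v)) = (cmod (u-v))^2" by (simp add: norm_power)
  show ?thesis using para[of u v] unfolding e by (simp add: norm_mult power_mult_distrib algebra_simps)
qed

lemma cond:
  fixes u v :: complex
  shows "(cmod u = 1 \<and> cmod v \<le> 1) \<or> (cmod v = 1 \<and> cmod u \<le> 1) \<longleftrightarrow>
     (((cmod u)^2 - 1) * ((cmod v)^2 - 1) = 0 \<and> cmod (u * v) \<le> 1)"
proof -
  have a: "cmod u \<ge> 0" "cmod v \<ge> 0" by auto
  have "(cmod u)^2 = 1 \<longleftrightarrow> cmod u = 1" using a by (smt (verit) power2_eq_1_iff)
  moreover have "(cmod v)^2 = 1 \<longleftrightarrow> cmod v = 1" using a by (smt (verit) power2_eq_1_iff)
  ultimately show ?thesis by (auto simp: norm_mult)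
qed

theorem proposition3p2:
  fixes b c :: complex
  shows "(\<exists>z1 z2. (\<forall>z. z^2 - b*z + c = (z - z1) * (z - z2)) \<and> cmod z1 = 1 \<and> cmod z2 \<le> 1)
         \<longleftrightarrow> ((cmod c)^2 - (1/2) * (cmod b)^2 - (1/2) * cmod (b^2 - 4*c) + 1 = 0 \<and> cmod c \<le> 1)"
proof
  assume "\<exists>z1 z2. (\<forall>z. z^2 - b*z + c = (z - z1) * (z - z2)) \<and> cmod z1 = 1 \<and> cmod z2 \<le> 1"
  then obtain z1 z2 where f: "\<forall>z. z^2 - b*z + c = (z - z1) * (z - z2)" and m: "cmod z1 = 1" "cmod z2 \<le> 1" by blast
  from f[rule_format, of 0] have c: "c = z1 * z2" by simp
  from f[rule_format, of 1] have "1 - b + c = (1-z1)*(1-z2)" by simp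
  with c have b: "b = z1+z2" by (simp add: algebra_simps)
  show "(cmod c)^2 - (1/2) * (cmod b)^2 - (1/2) * cmod (b^2 - 4*c) + 1 = 0 \<and> cmod c \<le> 1"
    unfolding b c key using cond[of z1 z2] m by blast
next
  assume r: "(cmod c)^2 - (1/2) * (cmod b)^2 - (1/2) * cmod (b^2 - 4*c) + 1 = 0 \<and> cmod c \<le> 1"
  define d where "d = csqrt (b^2 - 4*c)"
  define u where "u = (b+d)/2"
  define v where "v = (b-d)/2"
  have dd: "d^2 = b^2 - 4*c" unfolding d_def by simp
  have b: "b = u+v" unfolding u_def v_def by (simp add: field_simps)
  have c: "c = u * v" unfolding u_def v_def using dd by (simp add: field_simps power2_eq_square)
  have f: "\<forall>z. z^2 - b*z + c = (z - u) * (z - v)" "\<forall>z. z^2 - b*z + c = (z - v) * (z - u)"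
    unfolding b c by (auto simp: power2_eq_square algebra_simps)
  from r have "(cmod u = 1 \<and> cmod v \<le> 1) \<or> (cmod v = 1 \<and> cmod u \<le> 1)"
    unfolding b c key using cond[of u v] by blast
  thus "\<exists>z1 z2. (\<forall>z. z^2 - b*z + c = (z - z1) * (z - z2)) \<and> cmod z1 = 1 \<and> cmod z2 \<le> 1"
    using f by blast
qed

end
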